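(* Work in the cube $[-1,1]^d\subset\mathbb{R}^d$ with the dual cells and shifted dual cells defined in the context. Let $z'=(z'_1,\dots,z'_d)$ have exactly $p$ entries equal to $\bullet$, and $z''$ exactly $q$ entries equal to $\bullet$. Let $I=\{i:z'_i=\bullet\}$ and $J=\{j:z''_j=\bullet\}$. Then: 1. If $I\cap J\neq\emptyset$, then $P^\vee_{z'}\cap\tilde P^\vee_{z''}(\epsilon)=\emptyset$ for every $\epsilon>0$. 2. If $I\cap J=\emptyset$ and for some $k$ one has $\{z'_k,z''_k\}=\{+,-\}$, then $\lim_{\epsilon\to0^+}P^\vee_{z'}\cap\tilde P^\vee_{z''}(\epsilon)$ has dimension lower than $d-p-q$. 3. If for some $k$ either ($z'_k=\bullet$ and $z''_k=+$) or ($z'_k=-$ and $z''_k=\bullet$), then $P^\vee_{z'}\cap\tilde P^\vee_{z''}(\epsilon)=\emptyset$ for every $\epsilon>0$. 4. Suppose $z'_k=z''_k$ whenever both lie in $\{+,-\}$. Suppose further that $z''_k=-$ for every $k$ with $z'_k=\bullet$, and $z'_k=+$ for every $k$ with $z''_k=\bullet$. Then $\lim_{\epsilon\to0^+}P^\vee_{z'}\cap\tilde P^\vee_{z''}(\epsilon)=P^\vee_z$, a $(d-p-q)$-dimensional dual cell. Here $z_k=z'_k=z''_k$ when $z'_k=z''_k\in\{+,-\}$, and $z_k=\bullet$ when $z'_k=\bullet$ or $z''_k=\bullet$.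
   Context: For $z\in\{+,-,\bullet\}^d$ with exactly $p$ entries $\bullet$, the dual cell is $$P^\vee_z=\{x\in\mathbb{R}^d: x_i=0 \text{ if } z_i=\bullet,\ x_i\in[0,1]\text{ if }z_i=+,\ x_i\in[-1,0]\text{ if }z_i=-\}.$$ It has dimension $d-p$ and is dual to the $p$-face of $[-1,1]^d$ in which the coordinates with $z_i=\bullet$ vary over $[-1,1]$ and $x_i=z_i$ (read as $\pm1$) otherwise. For $\epsilon>0$ the shifted dual cell is $$\tilde P^\vee_z(\epsilon)=[-1,1]^d\cap\Big\{\epsilon(1,1,\dots,1)+\sum_{i:z_i\neq\bullet}z_it_i\mathbf e_i:\ t_i\ge0\Big\},$$ where $z_i\in\{+,-\}$ is read as $\pm1$ and $\mathbf e_i$ are the standard unit vectors. Limits of sets as $\epsilon\to0^+$ are Hausdorff (Cauchy) limits. *)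

theory Defs
  imports "HOL-Analysis.Analysis"
begin

text \<open>Sign vectors z in {+,-,bullet}^d, with d = CARD('n).\<close>
datatype sgn3 = Pl | Mi | Bu

fun sval :: "sgn3 \<Rightarrow> real" where
  "sval Pl = 1" | "sval Mi = -1" | "sval Bu = 0"

definition dual_cell :: "('n::finite \<Rightarrow> sgn3) \<Rightarrow> (real^'n) set" where
  "dual_cell z = {x. \<forall>i. (z i = Bu \<longrightarrow> x$i = 0)
                      \<and> (z i = Pl \<longrightarrow> 0 \<le> x$i \<and> x$i \<le> 1)
                      \<and> (z i = Mi \<longrightarrow> -1 \<le> x$i \<and> x$i \<le> 0)}"

definition shifted_dual_cell :: "('n::finite \<Rightarrow> sgn3) \<Rightarrow> real \<Rightarrow> (real^'n) set" where
  "shifted_dual_cell z eps = cbox (- One) One \<inter>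
     {eps *\<^sub>R One + (\<Sum>i\<in>{i. z i \<noteq> Bu}. (sval (z i) * t i) *\<^sub>R axis i 1) | t.
        \<forall>i. t i \<ge> 0}"

text \<open>Hausdorff (Cauchy) convergence of a family of sets S t to a set L along a filter F:
  for every e > 0, eventually each set lies in the open e-neighbourhood of the other.
  (With this definition the empty set is an isolated point, as in the Hausdorff metric.)\<close>
definition set_tendsto :: "('b \<Rightarrow> 'a::metric_space set) \<Rightarrow> 'a set \<Rightarrow> 'b filter \<Rightarrow> bool" where
  "set_tendsto S L F \<longleftrightarrow> (\<forall>e>0. eventually (\<lambda>t. S t \<subseteq> (\<Union>y\<in>L. ball y e) \<and> L \<subseteq> (\<Union>y\<in>S t. ball y e)) F)"

end

theory Submission
  imports Defs
begin

fun in_shift :: "sgn3 \<Rightarrow> real \<Rightarrow> real \<Rightarrow> bool" where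
  "in_shift Bu e v = (v = e)" | "in_shift Pl e v = (e \<le> v)" | "in_shift Mi e v = (v \<le> e)"

fun in_dual :: "sgn3 \<Rightarrow> real \<Rightarrow> bool" where
  "in_dual Bu v = (v = 0)" | "in_dual Pl v = (0 \<le> v \<and> v \<le> 1)" | "in_dual Mi v = (-1 \<le> v \<and> v \<le> 0)"

lemma One_nth: "(One::real^'n::finite) $ i = 1"
proof -
  have "(One::real^'n) \<bullet> axis i 1 = 1" by (simp add: axis_in_Basis_iff)
  thus ?thesis by (simp add: inner_axis)
qed

lemma sum_axis_nth: "(\<Sum>j\<in>A. f j *\<^sub>R axis j (1::real)) $ i = (if i \<in> A then f i else 0)"
  for A :: "'n::finite set"
  by (simp add: axis_def if_distrib cong: if_cong) 

lemma dual_cell_eq: "dual_cell z = {x. \<forall>i. in_dual (z i) (x$i)}"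
proof -
  have e: "\<And>i v. ((z i = Bu \<longrightarrow> v = 0) \<and> (z i = Pl \<longrightarrow> 0 \<le> v \<and> v \<le> 1)
                      \<and> (z i = Mi \<longrightarrow> -1 \<le> v \<and> v \<le> 0)) = in_dual (z i) v"
    subgoal for i v by (cases "z i") auto done
  show ?thesis unfolding dual_cell_def e ..
qed

lemma cube_nth: "x \<in> cbox (- One) (One::real^'n::finite) \<longleftrightarrow> (\<forall>i. -1 \<le> x$i \<and> x$i \<le> 1)"
proof -
  have "x \<in> cbox (- One) (One::real^'n::finite) \<longleftrightarrow> (\<forall>i. (- One::real^'n)$i \<le> x$i \<and> x$i \<le> (One::real^'n)$i)"
    by (rule mem_box_cart(2))
  also have "\<dots> \<longleftrightarrow> (\<forall>i. -1 \<le> x$i \<and> x$i \<le> 1)"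
    by (simp only: vector_uminus_component One_nth)
  finally show ?thesis .
qed

lemma shifted_eq: "shifted_dual_cell z eps = {x. \<forall>i. -1 \<le> x$i \<and> x$i \<le> 1 \<and> in_shift (z i) eps (x$i)}"
proof (intro set_eqI iffI)
  fix x assume "x \<in> shifted_dual_cell z eps"
  then obtain t where x: "x = eps *\<^sub>R One + (\<Sum>i\<in>{i. z i \<noteq> Bu}. (sval (z i) * t i) *\<^sub>R axis i 1)"
    and t: "\<forall>i. t i \<ge> 0" and c: "x \<in> cbox (- One) One"
    unfolding shifted_dual_cell_def by auto
  show "x \<in> {x. \<forall>i. -1 \<le> x$i \<and> x$i \<le> 1 \<and> in_shift (z i) eps (x$i)}"
  proof safe
    fix i
    show "-1 \<le> x$i" "x$i \<le> 1" using c by (auto simp: cube_nth)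
    have xi: "x$i = eps + (if z i \<noteq> Bu then sval (z i) * t i else 0)"
      unfolding x by (simp only: vector_add_component vector_scaleR_component One_nth sum_axis_nth) simp
    show "in_shift (z i) eps (x$i)" using t[rule_format, of i] xi by (cases "z i") auto
  qed
next
  fix x assume "x \<in> {x. \<forall>i. -1 \<le> x$i \<and> x$i \<le> 1 \<and> in_shift (z i) eps (x$i)}"
  hence h: "\<And>i. -1 \<le> x$i \<and> x$i \<le> 1 \<and> in_shift (z i) eps (x$i)" by auto
  define t where "t i = sval (z i) * (x$i - eps)" for i
  have t: "\<forall>i. t i \<ge> 0" unfolding t_def
  proof
    fix i show "0 \<le> sval (z i) * (x$i - eps)" using h[of i] by (cases "z i") auto
  qed
  have "x = eps *\<^sub>R One + (\<Sum>i\<in>{i. z i \<noteq> Bu}. (sval (z i) * t i) *\<^sub>R axis i 1)"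
  proof (rule vec_eq_iff[THEN iffD2], rule allI)
    fix i
    show "x$i = (eps *\<^sub>R One + (\<Sum>i\<in>{i. z i \<noteq> Bu}. (sval (z i) * t i) *\<^sub>R axis i 1))$i"
      using h[of i] by (simp only: vector_add_component vector_scaleR_component One_nth sum_axis_nth) (cases "z i"; simp add: t_def)
  qed
  moreover have "x \<in> cbox (- One) One" using h by (auto simp: cube_nth)
  ultimately show "x \<in> shifted_dual_cell z eps" unfolding shifted_dual_cell_def using t by blast
qed


fun lo :: "sgn3 \<Rightarrow> sgn3 \<Rightarrow> real \<Rightarrow> real" where
  "lo Bu b e = 0" | "lo Pl Bu e = e" | "lo Pl Pl e = e" | "lo Pl Mi e = 0" | "lo Mi b e = -1"
fun hi :: "sgn3 \<Rightarrow> sgn3 \<Rightarrow> real \<Rightarrow> real" where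
  "hi Bu b e = 0" | "hi Pl Bu e = e" | "hi Pl Pl e = 1" | "hi Pl Mi e = e" | "hi Mi b e = 0"
definition good :: "sgn3 \<Rightarrow> sgn3 \<Rightarrow> bool" where "good a b \<longleftrightarrow> a = Pl \<or> b = Mi"

lemma coord_good: "0 < e \<Longrightarrow> e < 1 \<Longrightarrow> good a b \<Longrightarrow>
   (in_dual a v \<and> (-1 \<le> v \<and> v \<le> 1 \<and> in_shift b e v)) \<longleftrightarrow> lo a b e \<le> v \<and> v \<le> hi a b e"
  by (cases a; cases b; auto simp: good_def)

lemma coord_bad: "0 < e \<Longrightarrow> \<not> good a b \<Longrightarrow> \<not> (in_dual a v \<and> in_shift b e v)"
  by (cases a; cases b; auto simp: good_def)

lemma lohi: "0 \<le> e \<Longrightarrow> e < 1 \<Longrightarrow> lo a b e \<le> hi a b e"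
  "0 \<le> e \<Longrightarrow> \<bar>lo a b e - lo a b 0\<bar> \<le> e"
  "0 \<le> e \<Longrightarrow> \<bar>hi a b e - hi a b 0\<bar> \<le> e"
  by (cases a; cases b; auto)+

lemma inter_good:
  assumes "0 < e" "e < 1" "\<forall>i. good (z' i) (z'' i)"
  shows "dual_cell z' \<inter> shifted_dual_cell z'' e = {x. \<forall>i. lo (z' i) (z'' i) e \<le> x$i \<and> x$i \<le> hi (z' i) (z'' i) e}"
proof -
  have "\<And>x. ((\<forall>i. in_dual (z' i) (x$i)) \<and> (\<forall>i. -1 \<le> x$i \<and> x$i \<le> 1 \<and> in_shift (z'' i) e (x$i)))
     \<longleftrightarrow> (\<forall>i. in_dual (z' i) (x$i) \<and> (-1 \<le> x$i \<and> x$i \<le> 1 \<and> in_shift (z'' i) e (x$i)))" by blast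
  also have "\<And>x. (\<forall>i. in_dual (z' i) (x$i) \<and> (-1 \<le> x$i \<and> x$i \<le> 1 \<and> in_shift (z'' i) e (x$i)))
     \<longleftrightarrow> (\<forall>i. lo (z' i) (z'' i) e \<le> x$i \<and> x$i \<le> hi (z' i) (z'' i) e)"
    using coord_good[OF assms(1,2)] assms(3) by presburger
  finally show ?thesis unfolding dual_cell_eq shifted_eq by blast
qed

lemma inter_bad:
  assumes "0 < e" "\<exists>i. \<not> good (z' i) (z'' i)"
  shows "dual_cell z' \<inter> shifted_dual_cell z'' e = {}"
  unfolding dual_cell_eq shifted_eq using coord_bad[OF assms(1)] assms(2) by blast

lemma clampv:
  fixes x :: "real^'n::finite" and e :: real
  assumes "\<forall>i. a i \<le> b i" "\<forall>i. a' i \<le> x$i \<and> x$i \<le> b' i" "\<forall>i. \<bar>a i - a' i\<bar> \<le> e \<and> \<bar>b i - b' i\<bar> \<le> e"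
  shows "\<exists>y::real^'n. (\<forall>i. a i \<le> y$i \<and> y$i \<le> b i) \<and> dist x y \<le> CARD('n) * e"
proof -
  define y where "y = (\<chi> i. max (a i) (min (b i) (x$i)))"
  have yi: "\<And>i. y$i = max (a i) (min (b i) (x$i))" unfolding y_def by simp
  have c: "\<And>i. \<bar>(x - y)$i\<bar> \<le> e"
  proof -
    fix i show "\<bar>(x - y)$i\<bar> \<le> e" using assms[rule_format, of i] yi[of i] by (auto simp: abs_le_iff max_def min_def)
  qed
  have "dist x y = norm (x - y)" by (simp add: dist_norm)
  also have "\<dots> \<le> (\<Sum>i\<in>UNIV. \<bar>(x - y)$i\<bar>)" by (rule norm_le_l1_cart)
  also have "\<dots> \<le> of_nat (card (UNIV::'n set)) * e" by (rule sum_bounded_above) (use c in auto)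
  finally have "dist x y \<le> CARD('n) * e" by simp
  moreover have "\<forall>i. a i \<le> y$i \<and> y$i \<le> b i" using assms(1) yi by auto
  ultimately show ?thesis by blast
qed

lemma box_tendsto:
  fixes S :: "real \<Rightarrow> (real^'n::finite) set" and L H :: "'n \<Rightarrow> real \<Rightarrow> real"
  assumes S: "\<And>e. 0 < e \<Longrightarrow> e < 1 \<Longrightarrow> S e = {x. \<forall>i. L i e \<le> x$i \<and> x$i \<le> H i e}"
    and le: "\<And>i e. 0 \<le> e \<Longrightarrow> e < 1 \<Longrightarrow> L i e \<le> H i e"
    and dL: "\<And>i e. 0 \<le> e \<Longrightarrow> \<bar>L i e - L i 0\<bar> \<le> e"
    and dH: "\<And>i e. 0 \<le> e \<Longrightarrow> \<bar>H i e - H i 0\<bar> \<le> e"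
  shows "set_tendsto S {x. \<forall>i. L i 0 \<le> x$i \<and> x$i \<le> H i 0} (at_right 0)"
  unfolding set_tendsto_def
proof (intro allI impI)
  fix r :: real assume r: "r > 0"
  define d where "d = min (1/2) (r / (2 * CARD('n)))"
  have d: "0 < d" "d < 1" using r by (auto simp: d_def)
  show "eventually (\<lambda>t. S t \<subseteq> (\<Union>y\<in>{x. \<forall>i. L i 0 \<le> x$i \<and> x$i \<le> H i 0}. ball y r) \<and>
      {x. \<forall>i. L i 0 \<le> x$i \<and> x$i \<le> H i 0} \<subseteq> (\<Union>y\<in>S t. ball y r)) (at_right 0)"
  proof (rule eventually_mono[OF eventually_at_right_real[OF d(1)]])
    fix e assume "e \<in> {0<..<d}"
    hence e: "0 < e" "e < d" by auto
    have e1: "e < 1" using e d by simp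
    have ce: "CARD('n) * e < r"
    proof -
      have "CARD('n) * e \<le> CARD('n) * d" using e by simp
      also have "\<dots> \<le> CARD('n) * (r / (2 * CARD('n)))" unfolding d_def by (rule mult_left_mono) auto
      also have "\<dots> = r / 2" by simp
      finally show ?thesis using r by simp
    qed
    show "S e \<subseteq> (\<Union>y\<in>{x. \<forall>i. L i 0 \<le> x$i \<and> x$i \<le> H i 0}. ball y r) \<and>
      {x. \<forall>i. L i 0 \<le> x$i \<and> x$i \<le> H i 0} \<subseteq> (\<Union>y\<in>S e. ball y r)"
    proof safe
      fix x assume "x \<in> S e"
      hence xb: "\<forall>i. L i e \<le> x$i \<and> x$i \<le> H i e" using S[OF e(1) e1] by auto
      obtain y :: "real^'n" where y: "\<forall>i. L i 0 \<le> y$i \<and> y$i \<le> H i 0" "dist x y \<le> CARD('n) * e"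
        using clampv[of "\<lambda>i. L i 0" "\<lambda>i. H i 0" "\<lambda>i. L i e" x "\<lambda>i. H i e" e] xb le[of 0] dL[OF less_imp_le[OF e(1)]] dH[OF less_imp_le[OF e(1)]] e
        by (auto simp: abs_minus_commute)
      show "x \<in> (\<Union>y\<in>{x. \<forall>i. L i 0 \<le> x$i \<and> x$i \<le> H i 0}. ball y r)"
        using y ce by (auto simp: dist_commute intro!: bexI[of _ y])
    next
      fix x assume xb: "\<forall>i. L i 0 \<le> x$i \<and> x$i \<le> H i 0"
      obtain y :: "real^'n" where y: "\<forall>i. L i e \<le> y$i \<and> y$i \<le> H i e" "dist x y \<le> CARD('n) * e"
        using clampv[of "\<lambda>i. L i e" "\<lambda>i. H i e" "\<lambda>i. L i 0" x "\<lambda>i. H i 0" e] xb le[of e] dL[OF less_imp_le[OF e(1)]] dH[OF less_imp_le[OF e(1)]] e e1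
        by auto
      have "y \<in> S e" using S[OF e(1) e1] y by auto
      thus "x \<in> (\<Union>y\<in>S e. ball y r)"
        using y ce by (auto simp: dist_commute intro!: bexI[of _ y])
    qed
  qed
qed


lemma good_tendsto:
  assumes "\<forall>i. good (z' i) (z'' i)"
  shows "set_tendsto (\<lambda>e. dual_cell z' \<inter> shifted_dual_cell z'' e)
           {x. \<forall>i. lo (z' i) (z'' i) 0 \<le> x$i \<and> x$i \<le> hi (z' i) (z'' i) 0} (at_right 0)"
  by (rule box_tendsto[where L="\<lambda>i. lo (z' i) (z'' i)" and H="\<lambda>i. hi (z' i) (z'' i)"])
     (auto simp: inter_good[OF _ _ assms] lohi)

lemma bad_tendsto:
  assumes "\<exists>i. \<not> good (z' i) (z'' i)"
  shows "set_tendsto (\<lambda>e. dual_cell z' \<inter> shifted_dual_cell z'' e) {} (at_right 0)"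
  unfolding set_tendsto_def
proof (intro allI impI)
  fix r :: real assume "r > 0"
  show "eventually (\<lambda>t. dual_cell z' \<inter> shifted_dual_cell z'' t \<subseteq> (\<Union>y\<in>{}. ball y r) \<and>
             {} \<subseteq> (\<Union>y\<in>dual_cell z' \<inter> shifted_dual_cell z'' t. ball y r)) (at_right 0)"
    by (rule eventually_mono[OF eventually_at_right_real[of 0 1]]) (auto simp: inter_bad[OF _ assms])
qed

lemma aff_dim_sub:
  fixes S :: "(real^'n::finite) set"
  assumes "S \<subseteq> {x. \<forall>i. i \<notin> F \<longrightarrow> x$i = 0}"
  shows "aff_dim S \<le> int (card F)"
proof -
  have sub: "subspace {x::real^'n. \<forall>i. i \<notin> F \<longrightarrow> x$i = 0}"
    unfolding subspace_def by auto
  have "aff_dim S \<le> aff_dim {x::real^'n. \<forall>i. i \<notin> F \<longrightarrow> x$i = 0}" by (rule aff_dim_subset[OF assms])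
  also have "\<dots> = int (dim {x::real^'n. \<forall>i. i \<notin> F \<longrightarrow> x$i = 0})" by (rule aff_dim_subspace[OF sub])
  also have "\<dots> = int (card F)" using dim_substandard_cart[where 'a=real and d=F]
    by (simp add: dim_vec_eq)
  finally show ?thesis .
qed

lemma aff_dim_ge:
  fixes S :: "(real^'n::finite) set"
  assumes "0 \<in> S" "\<And>i. i \<in> F \<Longrightarrow> axis i (c i) \<in> S \<and> c i \<noteq> 0"
  shows "int (card F) \<le> aff_dim S"
proof -
  have "aff_dim S = int (dim ((+) (- 0) ` S))" by (rule aff_dim_eq_dim) (rule hull_inc[OF assms(1)])
  hence ad: "aff_dim S = int (dim S)" by simp
  define B where "B = (\<lambda>i. axis i (c i)) ` F"
  have inj: "inj_on (\<lambda>i. axis i (c i)) F"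
    by (rule inj_onI) (use assms(2) in \<open>auto simp: axis_eq_axis\<close>)
  have cB: "card B = card F" unfolding B_def by (rule card_image[OF inj])
  have BS: "B \<subseteq> S" unfolding B_def using assms(2) by auto
  have po: "pairwise orthogonal B" unfolding B_def pairwise_def orthogonal_def
    by (auto simp: inner_axis_axis)
  have z: "0 \<notin> B" unfolding B_def using assms(2) by (auto simp: axis_eq_0_iff)
  have "card B \<le> dim S" by (rule independent_card_le_dim[OF BS pairwise_orthogonal_independent[OF po z]])
  thus ?thesis using ad cB by simp
qed

lemma count_N:
  fixes z' z'' :: "'n::finite \<Rightarrow> sgn3"
  assumes "\<not>(\<exists>k. z' k = Bu \<and> z'' k = Bu)"
  shows "int CARD('n) - int (card {i. z' i = Bu}) - int (card {i. z'' i = Bu})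
       = int (card {i. z' i \<noteq> Bu \<and> z'' i \<noteq> Bu})"
proof -
  have U: "(UNIV::'n set) = {i. z' i = Bu} \<union> ({i. z'' i = Bu} \<union> {i. z' i \<noteq> Bu \<and> z'' i \<noteq> Bu})" by auto
  have "card (UNIV::'n set) = card {i. z' i = Bu} + (card {i. z'' i = Bu} + card {i. z' i \<noteq> Bu \<and> z'' i \<noteq> Bu})"
    apply (subst U)
    apply (subst card_Un_disjoint, simp, simp, use assms in blast)
    apply (subst card_Un_disjoint, auto)
    done
  thus ?thesis by simp
qed


theorem proposition6:
  fixes z' z'' :: "'n::finite \<Rightarrow> sgn3" and p q :: nat
  assumes hp: "p = card {i. z' i = Bu}"
      and hq: "q = card {i. z'' i = Bu}"
  shows
    "((\<exists>k. z' k = Bu \<and> z'' k = Bu) \<longrightarrow>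
        (\<forall>eps>0. dual_cell z' \<inter> shifted_dual_cell z'' eps = {}))
   \<and> ((\<not>(\<exists>k. z' k = Bu \<and> z'' k = Bu)) \<and>
       (\<exists>k. (z' k = Pl \<and> z'' k = Mi) \<or> (z' k = Mi \<and> z'' k = Pl)) \<longrightarrow>
        (\<exists>L. closed L \<and>
             set_tendsto (\<lambda>eps. dual_cell z' \<inter> shifted_dual_cell z'' eps) L (at_right 0) \<and>
             aff_dim L < int CARD('n) - int p - int q))
   \<and> ((\<exists>k. (z' k = Bu \<and> z'' k = Pl) \<or> (z' k = Mi \<and> z'' k = Bu)) \<longrightarrow>
        (\<forall>eps>0. dual_cell z' \<inter> shifted_dual_cell z'' eps = {}))
   \<and> ((\<forall>k. z' k \<noteq> Bu \<and> z'' k \<noteq> Bu \<longrightarrow> z' k = z'' k) \<and>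
       (\<forall>k. z' k = Bu \<longrightarrow> z'' k = Mi) \<and>
       (\<forall>k. z'' k = Bu \<longrightarrow> z' k = Pl) \<longrightarrow>
        (let z = (\<lambda>k. if z' k = Bu \<or> z'' k = Bu then Bu else z' k) in
          set_tendsto (\<lambda>eps. dual_cell z' \<inter> shifted_dual_cell z'' eps) (dual_cell z) (at_right 0)
          \<and> aff_dim (dual_cell z) = int CARD('n) - int p - int q))"
proof (intro conjI impI)
  show "\<forall>eps>0. dual_cell z' \<inter> shifted_dual_cell z'' eps = {}" if "\<exists>k. z' k = Bu \<and> z'' k = Bu"
    using that inter_bad by (metis good_def sgn3.distinct)
  show "\<forall>eps>0. dual_cell z' \<inter> shifted_dual_cell z'' eps = {}"
    if "\<exists>k. (z' k = Bu \<and> z'' k = Pl) \<or> (z' k = Mi \<and> z'' k = Bu)"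
    using that inter_bad by (metis good_def sgn3.distinct)
next
  define N where "N = {i. z' i \<noteq> Bu \<and> z'' i \<noteq> Bu}"
  assume a: "\<not>(\<exists>k. z' k = Bu \<and> z'' k = Bu) \<and> (\<exists>k. (z' k = Pl \<and> z'' k = Mi) \<or> (z' k = Mi \<and> z'' k = Pl))"
  have cnt: "int CARD('n) - int p - int q = int (card N)" unfolding hp hq N_def using a count_N by blast
  then obtain k where k: "(z' k = Pl \<and> z'' k = Mi) \<or> (z' k = Mi \<and> z'' k = Pl)" using a by blast
  show "\<exists>L. closed L \<and>
             set_tendsto (\<lambda>eps. dual_cell z' \<inter> shifted_dual_cell z'' eps) L (at_right 0) \<and>
             aff_dim L < int CARD('n) - int p - int q"
  proof (cases "\<forall>i. good (z' i) (z'' i)")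
    case False
    thus ?thesis using bad_tendsto[of z' z''] cnt by (intro exI[of _ "{}"]) auto
  next
    case True
    define Lm where "Lm = {x::real^'n. \<forall>i. lo (z' i) (z'' i) 0 \<le> x$i \<and> x$i \<le> hi (z' i) (z'' i) 0}"
    have "Lm = cbox (\<chi> i. lo (z' i) (z'' i) 0) (\<chi> i. hi (z' i) (z'' i) 0)"
      unfolding Lm_def by (auto simp: mem_box_cart)
    hence cl: "closed Lm" using closed_cbox by metis
    define F where "F = {i. (z' i = Pl \<and> z'' i = Pl) \<or> (z' i = Mi \<and> z'' i = Mi)}"
    have sub: "Lm \<subseteq> {x. \<forall>i. i \<notin> F \<longrightarrow> x$i = 0}"
    proof safe
      fix x i assume xL: "x \<in> Lm" and "i \<notin> F"
      have "lo (z' i) (z'' i) 0 \<le> x$i \<and> x$i \<le> hi (z' i) (z'' i) 0" using xL unfolding Lm_def by blast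
      thus "x$i = 0" using \<open>i \<notin> F\<close> unfolding F_def using True[rule_format, of i]
        by (cases "z' i"; cases "z'' i") (auto simp: good_def)
    qed
    have "F \<subseteq> N" unfolding F_def N_def by auto
    moreover have "k \<in> N - F" unfolding F_def N_def using k by auto
    ultimately have "F \<subset> N" by blast
    hence "card F < card N" by (simp add: psubset_card_mono)
    hence "aff_dim Lm < int CARD('n) - int p - int q" using aff_dim_sub[OF sub] cnt by linarith
    thus ?thesis using cl good_tendsto[OF True] unfolding Lm_def by blast
  qed
next
  assume a: "(\<forall>k. z' k \<noteq> Bu \<and> z'' k \<noteq> Bu \<longrightarrow> z' k = z'' k) \<and>
       (\<forall>k. z' k = Bu \<longrightarrow> z'' k = Mi) \<and> (\<forall>k. z'' k = Bu \<longrightarrow> z' k = Pl)"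
  define z where "z = (\<lambda>k. if z' k = Bu \<or> z'' k = Bu then Bu else z' k)"
  define N where "N = {i. z' i \<noteq> Bu \<and> z'' i \<noteq> Bu}"
  have nb: "\<not>(\<exists>k. z' k = Bu \<and> z'' k = Bu)" using a by force
  have cnt: "int CARD('n) - int p - int q = int (card N)" unfolding hp hq N_def using nb count_N by blast
  have gd: "\<forall>i. good (z' i) (z'' i)"
  proof
    fix i show "good (z' i) (z'' i)" using a[THEN conjunct1, rule_format, of i]
        a[THEN conjunct2, THEN conjunct1, rule_format, of i]
        a[THEN conjunct2, THEN conjunct2, rule_format, of i]
      by (cases "z' i"; cases "z'' i") (auto simp: good_def)
  qed
  have eq: "{x::real^'n. \<forall>i. lo (z' i) (z'' i) 0 \<le> x$i \<and> x$i \<le> hi (z' i) (z'' i) 0} = dual_cell z"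
    unfolding dual_cell_eq
  proof (intro Collect_cong all_cong1)
    fix x :: "real^'n" and i
    show "(lo (z' i) (z'' i) 0 \<le> x$i \<and> x$i \<le> hi (z' i) (z'' i) 0) = in_dual (z i) (x$i)"
      using gd[rule_format, of i] a[THEN conjunct1, rule_format, of i]
        a[THEN conjunct2, THEN conjunct1, rule_format, of i]
        a[THEN conjunct2, THEN conjunct2, rule_format, of i]
      unfolding z_def by (cases "z' i"; cases "z'' i") (auto simp: good_def)
  qed
  have zN: "N = {i. z i \<noteq> Bu}" unfolding N_def z_def by auto
  have up: "aff_dim (dual_cell z) \<le> int (card N)"
    by (rule aff_dim_sub) (auto simp: zN dual_cell_def)
  have lw: "int (card N) \<le> aff_dim (dual_cell z)"
  proof (rule aff_dim_ge[where c="\<lambda>i. sval (z i)"])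
    show "0 \<in> dual_cell z" by (auto simp: dual_cell_def)
    fix i assume "i \<in> N"
    hence "z i \<noteq> Bu" using zN by auto
    thus "axis i (sval (z i)) \<in> dual_cell z \<and> sval (z i) \<noteq> 0"
      by (cases "z i") (auto simp: dual_cell_def axis_def)
  qed
  show "let z = (\<lambda>k. if z' k = Bu \<or> z'' k = Bu then Bu else z' k) in
          set_tendsto (\<lambda>eps. dual_cell z' \<inter> shifted_dual_cell z'' eps) (dual_cell z) (at_right 0)
          \<and> aff_dim (dual_cell z) = int CARD('n) - int p - int q"
    unfolding Let_def z_def[symmetric] using good_tendsto[OF gd] eq up lw cnt by auto
qed

end
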